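(* Let $K$ be a field of characteristic $\neq 2$, $n\ge1$, and let $\mathcal C$ be an EACP over $K$ with natural basis $\{h_1,\dots,h_n,r\}$ and structural constants $a_{ij},b_i$. For $a\in\mathcal C$ let $L_a(x)=ax$, write $L_i=L_{h_i}$, and for $x=\sum_i x_ih_i+ur$ let ${\bf b}(x)=\sum_{i=1}^n b_ix_i$. Then for all $x\in\mathcal C$, all $m\ge1$ and all $i,i_1,\dots,i_m\in\{1,\dots,n\}$: $$L_{i_m}\circ L_{i_{m-1}}\circ\cdots\circ L_{i_1}(x)=\Big(\frac1{2^{m-1}}\prod_{j=1}^{m-1}b_{i_j}\Big)L_{i_m}(x),$$ $$L_r\circ L_i(x)=\frac12\sum_{j=1}^n a_{ij}L_j(x),\qquad L_i\circ L_r(x)=\frac{{\bf b}(x)}2\,L_i(r).$$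
   Context: An EACP over a field $K$ (characteristic $\neq 2$) is a $K$-algebra $\mathcal C$ with a basis $\{h_1,\dots,h_n,r\}$ (called a natural basis) whose multiplication is determined by bilinearity from $$h_ir=rh_i=\tfrac12\Big(\sum_{j=1}^n a_{ij}h_j+b_ir\Big),\qquad h_ih_j=0\ (i,j=1,\dots,n),\qquad rr=0,$$ for some constants $a_{ij},b_i\in K$. An empty product equals $1$. *)

theory Defs
  imports Main "HOL-Library.Function_Algebras"
begin

text \<open>Coordinate model of an EACP with natural basis h_1,...,h_n, r over a field 'k.
  An element x is a coordinate function nat => 'k: x 0 is the coefficient of r and
  x i (1 <= i <= n) is the coefficient of h_i; coordinates above n are zero.\<close>

definition eacp_carrier :: "nat \<Rightarrow> (nat \<Rightarrow> 'k::field) set" where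
  "eacp_carrier n = {x. \<forall>k>n. x k = 0}"

definition eacp_h :: "nat \<Rightarrow> nat \<Rightarrow> 'k::field" where
  "eacp_h i = (\<lambda>k. if k = i then 1 else 0)"

definition eacp_r :: "nat \<Rightarrow> 'k::field" where
  "eacp_r = (\<lambda>k. if k = 0 then 1 else 0)"

definition eacp_smul :: "'k::field \<Rightarrow> (nat \<Rightarrow> 'k) \<Rightarrow> nat \<Rightarrow> 'k" where
  "eacp_smul c x = (\<lambda>k. c * x k)"

text \<open>Bilinear extension of h_i r = r h_i = (1/2)(sum_j a_ij h_j + b_i r), h_i h_j = 0, r r = 0.\<close>
definition eacp_mult :: "nat \<Rightarrow> (nat \<Rightarrow> nat \<Rightarrow> 'k::field) \<Rightarrow> (nat \<Rightarrow> 'k)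
    \<Rightarrow> (nat \<Rightarrow> 'k) \<Rightarrow> (nat \<Rightarrow> 'k) \<Rightarrow> nat \<Rightarrow> 'k" where
  "eacp_mult n a b x y = (\<lambda>k.
     if k = 0 then (1/2) * (\<Sum>i=1..n. (x i * y 0 + x 0 * y i) * b i)
     else if k \<le> n then (1/2) * (\<Sum>i=1..n. (x i * y 0 + x 0 * y i) * a i k)
     else 0)"

definition eacp_L :: "nat \<Rightarrow> (nat \<Rightarrow> nat \<Rightarrow> 'k::field) \<Rightarrow> (nat \<Rightarrow> 'k)
    \<Rightarrow> (nat \<Rightarrow> 'k) \<Rightarrow> (nat \<Rightarrow> 'k) \<Rightarrow> nat \<Rightarrow> 'k" where
  "eacp_L n a b u x = eacp_mult n a b u x"

definition eacp_bform :: "nat \<Rightarrow> (nat \<Rightarrow> 'k::field) \<Rightarrow> (nat \<Rightarrow> 'k) \<Rightarrow> 'k" where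
  "eacp_bform n b x = (\<Sum>i=1..n. b i * x i)"

end

theory Submission
  imports Defs
begin

lemma Lh:
  assumes "i \<in> {1..n}"
  shows "eacp_L n a b (eacp_h i) y = (\<lambda>k. if k=0 then y 0 * b i / 2 else if k \<le> n then y 0 * a i k / 2 else (0::'k::field))"
proof
  fix k
  have s: "(\<Sum>i'=1..n. (eacp_h i i' * y 0 + eacp_h i 0 * y i') * f i') = y 0 * f i" for f :: "nat \<Rightarrow> 'k"
  proof -
    have "(\<Sum>i'=1..n. (eacp_h i i' * y 0 + eacp_h i 0 * y i') * f i') = (\<Sum>i'=1..n. if i' = i then y 0 * f i' else 0)"
      by (rule sum.cong) (use assms in \<open>auto simp: eacp_h_def\<close>)
    also have "\<dots> = y 0 * f i" using assms by simp
    finally show ?thesis .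
  qed
  show "eacp_L n a b (eacp_h i) y k = (if k=0 then y 0 * b i / 2 else if k \<le> n then y 0 * a i k / 2 else 0)"
    unfolding eacp_L_def eacp_mult_def
    by (simp only: s) simp
qed

lemma Lr:
  "eacp_L n a b eacp_r y = (\<lambda>k. if k=0 then (\<Sum>i=1..n. y i * b i)/2 else if k \<le> n then (\<Sum>i=1..n. y i * a i k)/2 else (0::'k::field))"
proof
  fix k
  have e: "\<And>i. i \<in> {1..n} \<Longrightarrow> eacp_r i = (0::'k)" by (auto simp: eacp_r_def)
  have s: "\<And>f::nat\<Rightarrow>'k. (\<Sum>i=1..n. (eacp_r i * y 0 + eacp_r 0 * y i) * f i) = (\<Sum>i=1..n. y i * f i)"
    by (rule sum.cong) (auto simp: e eacp_r_def)
  show "eacp_L n a b eacp_r y k = (if k=0 then (\<Sum>i=1..n. y i * b i)/2 else if k \<le> n then (\<Sum>i=1..n. y i * a i k)/2 else 0)"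
    unfolding eacp_L_def eacp_mult_def s by simp
qed

lemma sum_app: "finite A \<Longrightarrow> (sum f A) k = (\<Sum>j\<in>A. f j k)"
  by (induct rule: finite_induct) auto

lemma r0: "eacp_r 0 = (1::'k::field)" by (simp add: eacp_r_def)

lemma foldlem:
  fixes a :: "nat \<Rightarrow> nat \<Rightarrow> 'k::field"
  assumes "m \<ge> 1" "\<forall>j\<in>{1..m}. is j \<in> {1..n}" and char: "(2::'k) \<noteq> 0"
  shows "fold (\<lambda>j y. eacp_L n a b (eacp_h (is j)) y) [1..<m+1] x
          = eacp_smul ((1 / 2 ^ (m - 1)) * (\<Prod>j=1..m-1. b (is j)))
                      (eacp_L n a b (eacp_h (is m)) x)"
  using assms
proof (induction m rule: dec_induct)
  case base
  then show ?case by (simp add: eacp_smul_def)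
next
  case (step m)
  have im: "is m \<in> {1..n}" "is (Suc m) \<in> {1..n}" using step by auto
  have IH: "fold (\<lambda>j y. eacp_L n a b (eacp_h (is j)) y) [1..<m+1] x
          = eacp_smul ((1 / 2 ^ (m - 1)) * (\<Prod>j=1..m-1. b (is j)))
                      (eacp_L n a b (eacp_h (is m)) x)" using step by auto
  have pr: "(\<Prod>j=1..m. b (is j)) = (\<Prod>j=1..m-1. b (is j)) * b (is m)"
  proof -
    obtain m' where "m = Suc m'" using step(1) by (cases m) auto
    thus ?thesis by (simp add: prod.nat_ivl_Suc')
  qed
  have pw: "(2::'k) ^ m = 2 ^ (m-1) * 2"
  proof -
    obtain m' where "m = Suc m'" using step(1) by (cases m) auto
    thus ?thesis by simp
  qed
  show ?case
  proof -
    have u: "[1..<Suc m + 1] = [1..<m+1] @ [Suc m]" by simp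
    have "fold (\<lambda>j y. eacp_L n a b (eacp_h (is j)) y) [1..<Suc m+1] x
       = eacp_L n a b (eacp_h (is (Suc m))) (eacp_smul ((1 / 2 ^ (m - 1)) * (\<Prod>j=1..m-1. b (is j)))
                      (eacp_L n a b (eacp_h (is m)) x))"
      by (simp only: u fold_append comp_apply IH fold_Cons fold_Nil id_apply)
    also have "\<dots> = eacp_smul ((1 / 2 ^ (Suc m - 1)) * (\<Prod>j=1..Suc m-1. b (is j)))
                      (eacp_L n a b (eacp_h (is (Suc m))) x)"
      unfolding Lh[OF im(2)] Lh[OF im(1)] eacp_smul_def
      by (rule ext) (simp add: pr pr[simplified] pw char)
    finally show ?thesis .
  qed
qed

theorem mainTheorem11:
  fixes n :: nat and a :: "nat \<Rightarrow> nat \<Rightarrow> 'k::field" and b :: "nat \<Rightarrow> 'k"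
  assumes char: "(2::'k) \<noteq> 0"
    and n: "n \<ge> 1"
  shows
    "(\<forall>x \<in> eacp_carrier n. \<forall>m \<ge> 1. \<forall>is :: nat \<Rightarrow> nat.
        (\<forall>j\<in>{1..m}. is j \<in> {1..n}) \<longrightarrow>
        fold (\<lambda>j y. eacp_L n a b (eacp_h (is j)) y) [1..<m+1] x
          = eacp_smul ((1 / 2 ^ (m - 1)) * (\<Prod>j=1..m-1. b (is j)))
                      (eacp_L n a b (eacp_h (is m)) x))
     \<and> (\<forall>x \<in> eacp_carrier n. \<forall>i \<in> {1..n}.
        eacp_L n a b eacp_r (eacp_L n a b (eacp_h i) x)
          = eacp_smul (1/2) (\<Sum>j=1..n. eacp_smul (a i j) (eacp_L n a b (eacp_h j) x)))
     \<and> (\<forall>x \<in> eacp_carrier n. \<forall>i \<in> {1..n}.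
        eacp_L n a b (eacp_h i) (eacp_L n a b eacp_r x)
          = eacp_smul (eacp_bform n b x / 2) (eacp_L n a b (eacp_h i) eacp_r))"
proof -
  have four: "(4::'k) \<noteq> 0"
  proof
    assume h2: "(4::'k) = 0"
    have h1: "(2::'k) * 2 = 4" by simp
    have "(2::'k) * 2 = 0" using h1 h2 by (simp only:)
    with char show False using no_zero_divisors by blast
  qed
  show ?thesis
proof (intro conjI ballI allI impI)
  fix x :: "nat \<Rightarrow> 'k" and m :: nat and "is"
  assume "1 \<le> m" "\<forall>j\<in>{1..m}. is j \<in> {1..n}"
  then show "fold (\<lambda>j y. eacp_L n a b (eacp_h (is j)) y) [1..<m+1] x
          = eacp_smul ((1 / 2 ^ (m - 1)) * (\<Prod>j=1..m-1. b (is j)))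
                      (eacp_L n a b (eacp_h (is m)) x)" by (rule foldlem[OF _ _ char])
next
  fix x :: "nat \<Rightarrow> 'k" and i
  assume i: "i \<in> {1..n}"
  show "eacp_L n a b eacp_r (eacp_L n a b (eacp_h i) x)
          = eacp_smul (1/2) (\<Sum>j=1..n. eacp_smul (a i j) (eacp_L n a b (eacp_h j) x))"
  proof
    fix k
    have c: "(\<Sum>j=1..n. eacp_L n a b (eacp_h i) x j * f j) = (\<Sum>j=1..n. x 0 * a i j / 2 * f j)" for f
      by (rule sum.cong) (auto simp: Lh[OF i])
    have d: "(\<Sum>j=1..n. eacp_smul (a i j) (eacp_L n a b (eacp_h j) x)) k
         = (\<Sum>j=1..n. a i j * eacp_L n a b (eacp_h j) x k)"
      by (simp add: sum_app eacp_smul_def)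
    have d2: "(\<Sum>j=1..n. a i j * eacp_L n a b (eacp_h j) x k)
         = (\<Sum>j=1..n. a i j * (if k=0 then x 0 * b j / 2 else if k \<le> n then x 0 * a j k / 2 else 0))"
      by (rule sum.cong) (auto simp: Lh)
    have e: "eacp_smul (1/2) (\<Sum>j=1..n. eacp_smul (a i j) (eacp_L n a b (eacp_h j) x)) k
       = 1/2 * (\<Sum>j=1..n. eacp_smul (a i j) (eacp_L n a b (eacp_h j) x)) k"
      by (simp add: eacp_smul_def)
    show "eacp_L n a b eacp_r (eacp_L n a b (eacp_h i) x) k
          = eacp_smul (1/2) (\<Sum>j=1..n. eacp_smul (a i j) (eacp_L n a b (eacp_h j) x)) k"
      unfolding e d d2 Lr c
      by (simp add: sum_distrib_left sum_divide_distrib field_simps)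
  qed
next
  fix x :: "nat \<Rightarrow> 'k" and i
  assume i: "i \<in> {1..n}"
  show "eacp_L n a b (eacp_h i) (eacp_L n a b eacp_r x)
          = eacp_smul (eacp_bform n b x / 2) (eacp_L n a b (eacp_h i) eacp_r)"
    by (rule ext) (simp add: Lh[OF i] Lr eacp_smul_def eacp_bform_def r0 mult.commute four char)
qed
qed

end
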